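(* In the second toy theory described in the context, fix any initial (pure or mixed) state and any finite sequence $Y_1,\dots,Y_m$ of Bob's measurements ($Y_k\in\{B_1,B_2\}$). Consider any finite sequence of Alice's measurements (each in $\{A_1,A_2\}$, possibly empty) and any interleaving of it with $Y_1,\dots,Y_m$ into a single sequence of measurements performed one after another. Then the joint probability distribution of the outcomes of $Y_1,\dots,Y_m$ does not depend on Alice's sequence or on the interleaving (in particular it equals the distribution obtained when Alice performs no measurement). The same holds with the roles of Alice and Bob exchanged.
   Context: Second toy theory. Let $V=\{\emptyset,-,+,\ominus,\oplus\}$ be the set of hidden values. A pure state is a quadruple $a_1^{v_1}a_2^{v_2}b_1^{v_3}b_2^{v_4}$ with $v_1,\dots,v_4\in V$, where $v_1,v_2,v_3,v_4$ are the hidden values of the observables $A_1,A_2,B_1,B_2$ respectively. A hidden value $\emptyset$ is called undetermined, $-$ and $+$ are potential values $-1$ and $+1$, and $\ominus,\oplus$ are actual values $-1$ and $+1$. A mixed state is a probability distribution over pure states; measurements act on mixed states by linearity (first sample a pure state, then apply the rules below). $A_1,A_2$ are Alice's observables, $B_1,B_2$ are Bob's; for $X$ one of them, the other observable of the same party is called its partner. Measuring a $\pm1$-valued observable $X$ on a pure state: (1) Outcome: if the hidden value of $X$ is $\emptyset$, the outcome is $\pm1$ with probability $1/2$ each; if it is $+$ or $\oplus$ the outcome is $+1$ with certainty; if it is $-$ or $\ominus$ the outcome is $-1$ with certainty. (2) Post-measurement state when the pre-measurement state is not $a_1^\emptyset a_2^\emptyset b_1^\emptyset b_2^\emptyset$: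 the hidden value of $X$ becomes the actual value of the outcome ($\oplus$ for $+1$, $\ominus$ for $-1$); if the partner of $X$ has a potential value ($+$ or $-$), this potential value flips sign with probability $1/2$ (independently), otherwise it is unchanged; the hidden values of the other party's two observables are unchanged. (3) Post-measurement state when the pre-measurement state is $a_1^\emptyset a_2^\emptyset b_1^\emptyset b_2^\emptyset$ (each outcome having probability $1/2$): measuring $A_1$ gives $a_1^\ominus a_2^\emptyset b_1^- b_2^-$ on outcome $-1$ and $a_1^\oplus a_2^\emptyset b_1^+ b_2^+$ on outcome $+1$; measuring $A_2$ gives $a_1^\emptyset a_2^\ominus b_1^- b_2^+$ on $-1$ and $a_1^\emptyset a_2^\oplus b_1^+ b_2^-$ on $+1$; measuring $B_1$ gives $a_1^- a_2^- b_1^\ominus b_2^\emptyset$ on $-1$ and $a_1^+ a_2^+ b_1^\oplus b_2^\emptyset$ on $+1$; measuring $B_2$ gives $a_1^- a_2^+ b_1^\emptyset b_2^\ominus$ on $-1$ and $a_1^+ a_2^- b_1^\emptyset b_2^\oplus$ on $+1$. *)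

theory Defs
  imports "HOL-Probability.Probability"
begin

text \<open>Hidden values: undetermined, potential -1/+1, actual -1/+1.\<close>
datatype hv = Und | PotM | PotP | ActM | ActP

datatype obs = A1 | A2 | B1 | B2

type_synonym state = "obs \<Rightarrow> hv"

definition is_Alice :: "obs \<Rightarrow> bool" where
  "is_Alice X \<longleftrightarrow> X = A1 \<or> X = A2"

definition is_Bob :: "obs \<Rightarrow> bool" where
  "is_Bob X \<longleftrightarrow> X = B1 \<or> X = B2"

fun partner :: "obs \<Rightarrow> obs" where
  "partner A1 = A2" | "partner A2 = A1" | "partner B1 = B2" | "partner B2 = B1"

fun flip_pot :: "hv \<Rightarrow> hv" where
  "flip_pot PotM = PotP" | "flip_pot PotP = PotM" | "flip_pot v = v"

definition act :: "int \<Rightarrow> hv" where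
  "act r = (if r = 1 then ActP else ActM)"

definition mk :: "hv \<Rightarrow> hv \<Rightarrow> hv \<Rightarrow> hv \<Rightarrow> state" where
  "mk v1 v2 v3 v4 = (\<lambda>X. case X of A1 \<Rightarrow> v1 | A2 \<Rightarrow> v2 | B1 \<Rightarrow> v3 | B2 \<Rightarrow> v4)"

definition all_und :: state where
  "all_und = mk Und Und Und Und"

fun post_und :: "obs \<Rightarrow> int \<Rightarrow> state" where
  "post_und A1 r = (if r = 1 then mk ActP Und PotP PotP else mk ActM Und PotM PotM)"
| "post_und A2 r = (if r = 1 then mk Und ActP PotP PotM else mk Und ActM PotM PotP)"
| "post_und B1 r = (if r = 1 then mk PotP PotP ActP Und else mk PotM PotM ActM Und)"
| "post_und B2 r = (if r = 1 then mk PotP PotM Und ActP else mk PotM PotP Und ActM)"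

definition fair_sign :: "int pmf" where
  "fair_sign = pmf_of_set {-1, 1}"

definition outcome_dist :: "hv \<Rightarrow> int pmf" where
  "outcome_dist v = (case v of Und \<Rightarrow> fair_sign
                      | PotP \<Rightarrow> return_pmf 1 | ActP \<Rightarrow> return_pmf 1
                      | PotM \<Rightarrow> return_pmf (-1) | ActM \<Rightarrow> return_pmf (-1))"

definition measure_pure :: "obs \<Rightarrow> state \<Rightarrow> (int \<times> state) pmf" where
  "measure_pure X s =
     (if s = all_und then
        map_pmf (\<lambda>r. (r, post_und X r)) fair_sign
      else
        bind_pmf (outcome_dist (s X)) (\<lambda>r.
        map_pmf (\<lambda>f. (r, (s(X := act r))(partner X :=
                        (if f then flip_pot (s (partner X)) else s (partner X)))))
          (bernoulli_pmf (1/2))))"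

fun run_pure :: "obs list \<Rightarrow> state \<Rightarrow> int list pmf" where
  "run_pure [] s = return_pmf []"
| "run_pure (X # xs) s =
     bind_pmf (measure_pure X s) (\<lambda>(r, s'). map_pmf (\<lambda>os. r # os) (run_pure xs s'))"

text \<open>Mixed state = pmf over pure states; measurements act by linearity.\<close>
definition run :: "obs list \<Rightarrow> state pmf \<Rightarrow> int list pmf" where
  "run xs p = bind_pmf p (run_pure xs)"

definition party_outcomes :: "(obs \<Rightarrow> bool) \<Rightarrow> obs list \<Rightarrow> int list \<Rightarrow> int list" where
  "party_outcomes P xs os = map snd (filter (\<lambda>(X, _). P X) (zip xs os))"

end

theory Submission
  imports Defs
begin

abbreviation coin :: "(bool \<Rightarrow> 'a pmf) \<Rightarrow> 'a pmf" where
  "coin g \<equiv> bind_pmf (bernoulli_pmf (1/2)) g"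

lemma coin_not: "coin (\<lambda>b. g (\<not> b)) = coin g"
proof -
  have "map_pmf Not (pmf_of_set (UNIV::bool set)) = pmf_of_set (Not ` UNIV)"
    by (rule map_pmf_of_set_inj) (auto simp: inj_def)
  moreover have "Not ` (UNIV::bool set) = UNIV" by auto
  ultimately have "map_pmf Not (bernoulli_pmf (1/2)) = bernoulli_pmf (1/2)"
    by (simp add: bernoulli_pmf_half_conv_pmf_of_set)
  then have "coin g = bind_pmf (map_pmf Not (bernoulli_pmf (1/2))) g" by simp
  then show ?thesis by (simp add: bind_map_pmf)
qed

lemma coin_xor: "coin (\<lambda>f. G (d \<noteq> f)) = coin G"
  by (cases d) (simp_all add: coin_not)

lemma coin_xor2: "coin (\<lambda>c. coin (\<lambda>f. H (c \<noteq> f))) = coin H"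
proof -
  have "\<And>c. coin (\<lambda>f. H (c \<noteq> f)) = coin H" by (rule coin_xor)
  then show ?thesis by simp
qed

definition sgnb :: "bool \<Rightarrow> int" where "sgnb b = (if b then 1 else -1)"
definition potb :: "bool \<Rightarrow> hv" where "potb b = (if b then PotP else PotM)"

lemma fair_coin: "bind_pmf fair_sign g = coin (\<lambda>b. g (sgnb b))"
proof -
  have "map_pmf sgnb (pmf_of_set (UNIV::bool set)) = pmf_of_set (sgnb ` UNIV)"
    by (rule map_pmf_of_set_inj) (auto simp: inj_on_def sgnb_def)
  moreover have "sgnb ` UNIV = {-1, 1}" by (auto simp: sgnb_def)
  ultimately have "fair_sign = map_pmf sgnb (bernoulli_pmf (1/2))"
    by (simp add: bernoulli_pmf_half_conv_pmf_of_set fair_sign_def)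
  then show ?thesis by (simp only: \<open>fair_sign = _\<close> bind_map_pmf)
qed

lemma od_pot: "outcome_dist (potb c) = return_pmf (sgnb c)"
  by (cases c) (simp_all add: outcome_dist_def potb_def sgnb_def)
lemma act_sgnb: "act (sgnb c) = (if c then ActP else ActM)"
  by (simp add: act_def sgnb_def)
lemma flip_potb: "flip_pot (potb c) = potb (\<not> c)"
  by (cases c) (simp_all add: potb_def)
lemma od_und: "outcome_dist Und = fair_sign" by (simp add: outcome_dist_def)

fun hh :: "obs \<Rightarrow> obs \<Rightarrow> obs list \<Rightarrow> hv \<Rightarrow> hv \<Rightarrow> int list pmf" where
  "hh P Q [] a b = return_pmf []"
| "hh P Q (X # ys) a b = (if X = P then
     bind_pmf (outcome_dist a) (\<lambda>r. coin (\<lambda>f. map_pmf ((#) r) (hh P Q ys (act r) (if f then flip_pot b else b))))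
   else
     bind_pmf (outcome_dist b) (\<lambda>r. coin (\<lambda>f. map_pmf ((#) r) (hh P Q ys (if f then flip_pot a else a) (act r)))))"

lemma UA: "hh P Q ys Und b = coin (\<lambda>c. hh P Q ys (potb c) b)"
proof (induction ys arbitrary: b)
  case Nil then show ?case by simp
next
  case (Cons X ys)
  show ?case
  proof (cases "X = P")
    case True
    then show ?thesis by (simp add: od_und fair_coin od_pot bind_return_pmf)
  next
    case False
    have "hh P Q (X # ys) Und b = bind_pmf (outcome_dist b) (\<lambda>r. map_pmf ((#) r) (hh P Q ys Und (act r)))"
      using False by (simp cong: if_cong)
    also have "\<dots> = bind_pmf (outcome_dist b) (\<lambda>r. map_pmf ((#) r) (coin (\<lambda>c. coin (\<lambda>f. hh P Q ys (potb (c \<noteq> f)) (act r)))))"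
    proof (rule bind_pmf_cong[OF refl])
      fix r
      show "map_pmf ((#) r) (hh P Q ys Und (act r)) = map_pmf ((#) r) (coin (\<lambda>c. coin (\<lambda>f. hh P Q ys (potb (c \<noteq> f)) (act r))))"
        by (simp only: Cons.IH coin_xor2[of "\<lambda>x. hh P Q ys (potb x) (act r)"])
    qed
    also have "\<dots> = coin (\<lambda>c. hh P Q (X # ys) (potb c) b)"
      using False
      apply (simp add: map_bind_pmf flip_potb)
      apply (subst bind_commute_pmf)
      apply (rule bind_pmf_cong, simp)
      apply (rule bind_pmf_cong, simp)
      apply (rule bind_pmf_cong, simp)
      apply (auto simp: potb_def)
      done
    finally show ?thesis .
  qed
qed

lemma UB: "hh P Q ys a Und = coin (\<lambda>c. hh P Q ys a (potb c))"
proof (induction ys arbitrary: a)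
  case Nil then show ?case by simp
next
  case (Cons X ys)
  show ?case
  proof (cases "X = P")
    case False
    then show ?thesis by (simp add: od_und fair_coin od_pot bind_return_pmf)
  next
    case True
    have "hh P Q (X # ys) a Und = bind_pmf (outcome_dist a) (\<lambda>r. map_pmf ((#) r) (hh P Q ys (act r) Und))"
      using True by (simp cong: if_cong)
    also have "\<dots> = bind_pmf (outcome_dist a) (\<lambda>r. map_pmf ((#) r) (coin (\<lambda>c. coin (\<lambda>f. hh P Q ys (act r) (potb (c \<noteq> f))))))"
    proof (rule bind_pmf_cong[OF refl])
      fix r
      show "map_pmf ((#) r) (hh P Q ys (act r) Und) = map_pmf ((#) r) (coin (\<lambda>c. coin (\<lambda>f. hh P Q ys (act r) (potb (c \<noteq> f)))))"
        by (simp only: Cons.IH coin_xor2[of "\<lambda>x. hh P Q ys (act r) (potb x)"])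
    qed
    also have "\<dots> = coin (\<lambda>c. hh P Q (X # ys) a (potb c))"
      using True
      apply (simp add: map_bind_pmf flip_potb)
      apply (subst bind_commute_pmf)
      apply (rule bind_pmf_cong, simp)
      apply (rule bind_pmf_cong, simp)
      apply (rule bind_pmf_cong, simp)
      apply (auto simp: potb_def)
      done
    finally show ?thesis .
  qed
qed

lemma ifpot: "(if f then flip_pot (potb d) else potb d) = potb (d \<noteq> f)"
  by (cases f; cases d) (simp_all add: potb_def)

lemma coin_eq: "coin (\<lambda>b. F (b = c)) = coin F"
proof (cases c)
  case True then show ?thesis by simp
next
  case False
  then have "(\<lambda>b. F (b = c)) = (\<lambda>b. F (\<not> b))" by auto
  then show ?thesis by (simp only: coin_not)
qed

lemma L3: "hh P Q ys Und Und = coin (\<lambda>b. hh P Q ys (potb b) (potb (b = c)))"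
proof (cases ys)
  case Nil then show ?thesis by simp
next
  case (Cons X ys')
  show ?thesis
  proof (cases "X = P")
    case True
    have "hh P Q ys Und Und = coin (\<lambda>b. map_pmf ((#) (sgnb b)) (hh P Q ys' (act (sgnb b)) Und))"
      using True Cons by (simp add: od_und fair_coin cong: if_cong)
    also have "\<dots> = coin (\<lambda>b. hh P Q ys (potb b) (potb (b = c)))"
    proof (rule bind_pmf_cong[OF refl])
      fix b
      have "hh P Q ys (potb b) (potb (b = c)) = coin (\<lambda>f. map_pmf ((#) (sgnb b)) (hh P Q ys' (act (sgnb b)) (potb ((b = c) \<noteq> f))))"
        using True Cons by (simp only: hh.simps simp_thms if_True od_pot bind_return_pmf ifpot)
      also have "\<dots> = coin (\<lambda>f. map_pmf ((#) (sgnb b)) (hh P Q ys' (act (sgnb b)) (potb f)))"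
        by (rule coin_xor)
      also have "\<dots> = map_pmf ((#) (sgnb b)) (hh P Q ys' (act (sgnb b)) Und)"
        by (simp add: UB map_bind_pmf)
      finally show "map_pmf ((#) (sgnb b)) (hh P Q ys' (act (sgnb b)) Und) = hh P Q ys (potb b) (potb (b = c))" by simp
    qed
    finally show ?thesis .
  next
    case False
    have "hh P Q ys Und Und = coin (\<lambda>b. map_pmf ((#) (sgnb b)) (hh P Q ys' Und (act (sgnb b))))"
      using False Cons by (simp add: od_und fair_coin cong: if_cong)
    also have "\<dots> = coin (\<lambda>b. (\<lambda>d. map_pmf ((#) (sgnb d)) (hh P Q ys' Und (act (sgnb d)))) (b = c))"
      by (rule coin_eq[of "\<lambda>d. map_pmf ((#) (sgnb d)) (hh P Q ys' Und (act (sgnb d)))" c, symmetric])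
    also have "\<dots> = coin (\<lambda>b. hh P Q ys (potb b) (potb (b = c)))"
    proof (rule bind_pmf_cong[OF refl])
      fix b
      have "hh P Q ys (potb b) (potb (b = c)) = coin (\<lambda>f. map_pmf ((#) (sgnb (b = c))) (hh P Q ys' (potb (b \<noteq> f)) (act (sgnb (b = c)))))"
        using False Cons by (simp only: hh.simps simp_thms if_False od_pot bind_return_pmf ifpot)
      also have "\<dots> = coin (\<lambda>f. map_pmf ((#) (sgnb (b = c))) (hh P Q ys' (potb f) (act (sgnb (b = c)))))"
        by (rule coin_xor)
      also have "\<dots> = map_pmf ((#) (sgnb (b = c))) (hh P Q ys' Und (act (sgnb (b = c))))"
        by (simp add: UA map_bind_pmf)
      finally show "(\<lambda>d. map_pmf ((#) (sgnb d)) (hh P Q ys' Und (act (sgnb d)))) (b = c) = hh P Q ys (potb b) (potb (b = c))" by simp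
    qed
    finally show ?thesis .
  qed
qed

definition upd :: "obs \<Rightarrow> state \<Rightarrow> int \<Rightarrow> bool \<Rightarrow> state" where
  "upd X s r f = (s(X := act r))(partner X := (if f then flip_pot (s (partner X)) else s (partner X)))"

lemma partner_ne: "partner X \<noteq> X" by (cases X) auto

lemma upd_ne: "upd X s r f \<noteq> all_und"
proof
  assume "upd X s r f = all_und"
  then have "upd X s r f X = all_und X" by simp
  then show False using partner_ne[of X]
    by (cases X) (auto simp: upd_def all_und_def mk_def act_def split: if_splits)
qed

lemma run_pure_step:
  assumes "s \<noteq> all_und"
  shows "run_pure (X # ys) s = bind_pmf (outcome_dist (s X)) (\<lambda>r. coin (\<lambda>f. map_pmf ((#) r) (run_pure ys (upd X s r f))))"
  using assms by (simp add: measure_pure_def bind_assoc_pmf bind_map_pmf bind_return_pmf upd_def map_pmf_def)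

lemma L1:
  assumes pq: "(P = A1 \<and> Q = A2) \<or> (P = B1 \<and> Q = B2)"
  shows "set ys \<subseteq> {P, Q} \<Longrightarrow> s \<noteq> all_und \<Longrightarrow> run_pure ys s = hh P Q ys (s P) (s Q)"
proof (induction ys arbitrary: s)
  case Nil then show ?case by simp
next
  case (Cons X ys)
  have "run_pure (X # ys) s = bind_pmf (outcome_dist (s X)) (\<lambda>r. coin (\<lambda>f. map_pmf ((#) r) (run_pure ys (upd X s r f))))"
    by (rule run_pure_step[OF Cons.prems(2)])
  also have "\<dots> = bind_pmf (outcome_dist (s X)) (\<lambda>r. coin (\<lambda>f. map_pmf ((#) r) (hh P Q ys (upd X s r f P) (upd X s r f Q))))"
    using Cons.prems Cons.IH upd_ne by simp
  also have "\<dots> = hh P Q (X # ys) (s P) (s Q)"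
    using pq Cons.prems(1) by (auto simp: upd_def cong: if_cong)
  finally show ?case .
qed

lemma L2:
  assumes pq: "(P = A1 \<and> Q = A2) \<or> (P = B1 \<and> Q = B2)"
    and "set ys \<subseteq> {P, Q}"
  shows "run_pure ys all_und = hh P Q ys Und Und"
proof (cases ys)
  case Nil then show ?thesis by simp
next
  case (Cons X ys')
  have ne: "post_und X r \<noteq> all_und" for r
    by (cases X) (auto simp: all_und_def mk_def fun_eq_iff split: obs.splits)
  have "run_pure ys all_und = bind_pmf fair_sign (\<lambda>r. map_pmf ((#) r) (hh P Q ys' (post_und X r P) (post_und X r Q)))"
    using Cons assms ne L1[OF pq] by (simp add: measure_pure_def bind_map_pmf)
  also have "\<dots> = hh P Q ys Und Und"
    using Cons pq assms(2) by (auto simp: od_und mk_def act_def cong: if_cong intro!: bind_pmf_cong)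
  finally show ?thesis .
qed

lemma K:
  assumes pq: "(P = A1 \<and> Q = A2) \<or> (P = B1 \<and> Q = B2)"
    and ys: "set ys \<subseteq> {P, Q}" and Y: "Y \<notin> {P, Q}"
  shows "bind_pmf (measure_pure Y s) (\<lambda>(r, s'). run_pure ys s') = run_pure ys s"
proof (cases "s = all_und")
  case False
  have pY: "partner Y \<notin> {P, Q}" using pq Y by (cases Y) auto
  have "bind_pmf (measure_pure Y s) (\<lambda>(r, s'). run_pure ys s') =
        bind_pmf (outcome_dist (s Y)) (\<lambda>r. coin (\<lambda>f. run_pure ys (upd Y s r f)))"
    using False by (simp add: measure_pure_def bind_assoc_pmf bind_map_pmf bind_return_pmf upd_def map_pmf_def)
  also have "\<dots> = bind_pmf (outcome_dist (s Y)) (\<lambda>r. coin (\<lambda>f. hh P Q ys (s P) (s Q)))"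
  proof -
    have u: "upd Y s r f P = s P \<and> upd Y s r f Q = s Q" for r f
    proof -
      have "P \<noteq> Y" "P \<noteq> partner Y" "Q \<noteq> Y" "Q \<noteq> partner Y" using Y pY by auto
      then show ?thesis by (simp add: upd_def)
    qed
    show ?thesis using L1[OF pq ys upd_ne] u by simp
  qed
  also have "\<dots> = run_pure ys s" using L1[OF pq ys False] by simp
  finally show ?thesis .
next
  case True
  define c where "c = (Y = A1 \<or> Y = B1)"
  have ne: "post_und X r \<noteq> all_und" for X r
    by (cases X) (auto simp: all_und_def mk_def fun_eq_iff split: obs.splits)
  have pu: "post_und Y (sgnb b) P = potb b \<and> post_und Y (sgnb b) Q = potb (b = c)" for b
    using pq Y by (cases Y; cases b) (auto simp: c_def sgnb_def potb_def mk_def)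
  have "bind_pmf (measure_pure Y s) (\<lambda>(r, s'). run_pure ys s') =
        bind_pmf fair_sign (\<lambda>r. run_pure ys (post_und Y r))"
    using True by (simp add: measure_pure_def bind_map_pmf)
  also have "\<dots> = coin (\<lambda>b. hh P Q ys (post_und Y (sgnb b) P) (post_und Y (sgnb b) Q))"
    using L1[OF pq ys ne] by (simp add: fair_coin)
  also have "\<dots> = coin (\<lambda>b. hh P Q ys (potb b) (potb (b = c)))"
    using pu by simp
  also have "\<dots> = hh P Q ys Und Und" by (rule L3[symmetric])
  also have "\<dots> = run_pure ys s" using L2[OF pq ys] True by simp
  finally show ?thesis .
qed

definition pty :: "obs \<Rightarrow> obs \<Rightarrow> obs \<Rightarrow> bool" where "pty P Q X \<longleftrightarrow> X = P \<or> X = Q"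

lemma M:
  assumes pq: "(P = A1 \<and> Q = A2) \<or> (P = B1 \<and> Q = B2)"
  shows "map_pmf (party_outcomes (pty P Q) xs) (run_pure xs s) = run_pure (filter (pty P Q) xs) s"
proof (induction xs arbitrary: s)
  case Nil then show ?case by (simp add: party_outcomes_def)
next
  case (Cons X xs)
  have po: "party_outcomes (pty P Q) (X # xs) (r # os) =
      (if pty P Q X then r # party_outcomes (pty P Q) xs os else party_outcomes (pty P Q) xs os)" for r os
    by (simp add: party_outcomes_def)
  have e: "map_pmf (party_outcomes (pty P Q) (X # xs)) (run_pure (X # xs) s) =
     bind_pmf (measure_pure X s) (\<lambda>x. map_pmf (party_outcomes (pty P Q) (X # xs)) (map_pmf ((#) (fst x)) (run_pure xs (snd x))))"
    by (simp add: map_bind_pmf split_beta)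
  show ?case
  proof (cases "pty P Q X")
    case True
    have "map_pmf (party_outcomes (pty P Q) (X # xs)) (run_pure (X # xs) s) =
       bind_pmf (measure_pure X s) (\<lambda>x. map_pmf ((#) (fst x)) (map_pmf (party_outcomes (pty P Q) xs) (run_pure xs (snd x))))"
      unfolding e using True by (simp add: pmf.map_comp o_def po)
    also have "\<dots> = run_pure (filter (pty P Q) (X # xs)) s"
      using True by (simp add: Cons.IH split_beta')
    finally show ?thesis .
  next
    case False
    have "map_pmf (party_outcomes (pty P Q) (X # xs)) (run_pure (X # xs) s) =
       bind_pmf (measure_pure X s) (\<lambda>x. map_pmf (party_outcomes (pty P Q) xs) (run_pure xs (snd x)))"
      unfolding e using False by (simp add: pmf.map_comp o_def po)
    also have "\<dots> = bind_pmf (measure_pure X s) (\<lambda>(r, s'). run_pure (filter (pty P Q) xs) s')"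
      by (simp add: Cons.IH split_beta')
    also have "\<dots> = run_pure (filter (pty P Q) (X # xs)) s"
    proof -
      have "set (filter (pty P Q) xs) \<subseteq> {P, Q}" by (auto simp: pty_def)
      moreover have "X \<notin> {P, Q}" using False by (simp add: pty_def)
      ultimately show ?thesis using False K[OF pq] by simp
    qed
    finally show ?thesis .
  qed
qed

theorem mainTheorem4:
  fixes p :: "state pmf" and ys xs :: "obs list"
  shows "(filter is_Bob xs = ys \<longrightarrow>
            map_pmf (party_outcomes is_Bob xs) (run xs p) = run ys p)
       \<and> (filter is_Alice xs = ys \<longrightarrow>
            map_pmf (party_outcomes is_Alice xs) (run xs p) = run ys p)"
proof -
  have b: "is_Bob = pty B1 B2" by (auto simp: fun_eq_iff is_Bob_def pty_def)
  have a: "is_Alice = pty A1 A2" by (auto simp: fun_eq_iff is_Alice_def pty_def)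
  show ?thesis
    unfolding run_def map_bind_pmf a b using M[of B1 B2] M[of A1 A2] by simp
qed

end
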